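(* Let $k \geq 3$ and let $A$ be a finite abelian group with at least $k$ elements. Fix a distinct difference system $S_1,\ldots,S_l$ in $A$. Call a subset of $A$ a basis if it has $k$ elements and is not a translate of a subset of some $S_i$ (i.e. it is not of the form $\{s+a : s \in T\}$ for some $a \in A$ and some $T \subseteq S_i$). Then these bases define a simple rank $k$ $A$-invariant matroid structure on $A$.
   Context: For an abelian group $A$, subsets $S_1,\ldots,S_l \subseteq A$ form a distinct difference system if: (i) for any $i,j$ and any $x,y \in S_i$, $z,w \in S_j$ with $x \neq y$ and $z \neq w$, the equation $x-y=z-w$ implies $x=z$ and $y=w$; (ii) each $S_i$ contains $0$ and at least one other element; (iii) $S_i \cap S_j = \{0\}$ for $i \neq j$. $A$ acts on itself by translation, and a matroid on $A$ is $A$-invariant if translates of bases are bases. A matroid is simple if every circuit has at least three elements. *)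

theory Defs
  imports Main
begin

definition distinct_difference_system :: "nat \<Rightarrow> (nat \<Rightarrow> 'a::ab_group_add set) \<Rightarrow> bool" where
  "distinct_difference_system l S \<longleftrightarrow>
     (\<forall>i<l. \<forall>j<l. \<forall>x\<in>S i. \<forall>y\<in>S i. \<forall>z\<in>S j. \<forall>w\<in>S j.
         x \<noteq> y \<longrightarrow> z \<noteq> w \<longrightarrow> x - y = z - w \<longrightarrow> x = z \<and> y = w) \<and>
     (\<forall>i<l. 0 \<in> S i \<and> (\<exists>x\<in>S i. x \<noteq> 0)) \<and>
     (\<forall>i<l. \<forall>j<l. i \<noteq> j \<longrightarrow> S i \<inter> S j = {0})"

definition matroid_bases :: "'a set \<Rightarrow> 'a set set \<Rightarrow> bool" where
  "matroid_bases E \<B> \<longleftrightarrow> finite E \<and> \<B> \<noteq> {} \<and> (\<forall>B\<in>\<B>. B \<subseteq> E) \<and>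
     (\<forall>B1\<in>\<B>. \<forall>B2\<in>\<B>. \<forall>x\<in>B1 - B2. \<exists>y\<in>B2 - B1. insert y (B1 - {x}) \<in> \<B>)"

definition mat_indep :: "'a set set \<Rightarrow> 'a set \<Rightarrow> bool" where
  "mat_indep \<B> X \<longleftrightarrow> (\<exists>B\<in>\<B>. X \<subseteq> B)"

definition mat_circuit :: "'a set \<Rightarrow> 'a set set \<Rightarrow> 'a set \<Rightarrow> bool" where
  "mat_circuit E \<B> C \<longleftrightarrow> C \<subseteq> E \<and> \<not> mat_indep \<B> C \<and> (\<forall>D. D \<subset> C \<longrightarrow> mat_indep \<B> D)"

definition simple_matroid :: "'a set \<Rightarrow> 'a set set \<Rightarrow> bool" where
  "simple_matroid E \<B> \<longleftrightarrow> (\<forall>C. mat_circuit E \<B> C \<longrightarrow> 3 \<le> card C)"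

definition matroid_rank_is :: "'a set set \<Rightarrow> nat \<Rightarrow> bool" where
  "matroid_rank_is \<B> k \<longleftrightarrow> (\<forall>B\<in>\<B>. card B = k)"

definition translation_invariant :: "'a::ab_group_add set set \<Rightarrow> bool" where
  "translation_invariant \<B> \<longleftrightarrow> (\<forall>B\<in>\<B>. \<forall>a. (\<lambda>x. x + a) ` B \<in> \<B>)"

definition dds_bases :: "nat \<Rightarrow> nat \<Rightarrow> (nat \<Rightarrow> 'a::ab_group_add set) \<Rightarrow> 'a set set" where
  "dds_bases k l S = {X. card X = k \<and>
      \<not> (\<exists>i<l. \<exists>a. \<exists>T. T \<subseteq> S i \<and> X = (\<lambda>s. s + a) ` T)}"

end

theory Submission
  imports Defs
begin

definition trs :: "(nat \<Rightarrow> 'a::ab_group_add set) \<Rightarrow> nat \<Rightarrow> 'a \<Rightarrow> 'a set" where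
  "trs S i a = (\<lambda>s. s + a) ` S i"

lemma dds_bases_iff:
  "X \<in> dds_bases k l S \<longleftrightarrow> card X = k \<and> \<not> (\<exists>i<l. \<exists>a. X \<subseteq> trs S i a)"
proof -
  have pw: "(\<exists>T. T \<subseteq> S i \<and> X = (\<lambda>s. s + a) ` T) \<longleftrightarrow> X \<subseteq> trs S i a" for i a
  proof
    assume "\<exists>T. T \<subseteq> S i \<and> X = (\<lambda>s. s + a) ` T"
    then obtain T where T: "T \<subseteq> S i" "X = (\<lambda>s. s + a) ` T" by blast
    show "X \<subseteq> trs S i a" unfolding trs_def T(2) using T(1) by (rule image_mono)
  next
    assume h: "X \<subseteq> trs S i a"
    show "\<exists>T. T \<subseteq> S i \<and> X = (\<lambda>s. s + a) ` T"
    proof (intro exI conjI)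
      show "(\<lambda>x. x - a) ` X \<subseteq> S i"
      proof
        fix y assume "y \<in> (\<lambda>x. x - a) ` X"
        then obtain x where x: "x \<in> X" "y = x - a" by blast
        then obtain s where "s \<in> S i" "x = s + a" using h unfolding trs_def by blast
        then show "y \<in> S i" using x by simp
      qed
      show "X = (\<lambda>s. s + a) ` (\<lambda>x. x - a) ` X" by (simp add: image_image)
    qed
  qed
  show ?thesis unfolding dds_bases_def mem_Collect_eq by (simp only: pw)
qed

lemma dds_D:
  assumes "distinct_difference_system l S" "i < l" "j < l" "x \<in> S i" "y \<in> S i" "z \<in> S j" "w \<in> S j"
    "x \<noteq> y" "z \<noteq> w" "x - y = z - w"
  shows "x = z \<and> y = w"
proof -
  have "\<forall>i<l. \<forall>j<l. \<forall>x\<in>S i. \<forall>y\<in>S i. \<forall>z\<in>S j. \<forall>w\<in>S j.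
         x \<noteq> y \<longrightarrow> z \<noteq> w \<longrightarrow> x - y = z - w \<longrightarrow> x = z \<and> y = w"
    using assms(1) unfolding distinct_difference_system_def by (rule conjunct1)
  from this[rule_format, OF assms(2-10)] show ?thesis .
qed

lemma dds_nz:
  assumes "distinct_difference_system l S" "i < l"
  shows "\<exists>x\<in>S i. x \<noteq> 0"
proof -
  have "\<forall>i<l. 0 \<in> S i \<and> (\<exists>x\<in>S i. x \<noteq> 0)"
    using assms(1) unfolding distinct_difference_system_def by (rule conjunct1[OF conjunct2])
  from this[rule_format, OF assms(2)] show ?thesis by (rule conjunct2)
qed

lemma dds_disj:
  assumes "distinct_difference_system l S" "i < l" "j < l" "i \<noteq> j"
  shows "S i \<inter> S j = {0}"
proof -
  have "\<forall>i<l. \<forall>j<l. i \<noteq> j \<longrightarrow> S i \<inter> S j = {0}"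
    using assms(1) unfolding distinct_difference_system_def by (rule conjunct2[OF conjunct2])
  from this[rule_format, OF assms(2-4)] show ?thesis .
qed

lemma two_common:
  assumes D: "distinct_difference_system l S" and "i < l" "j < l" "u \<noteq> v"
    and "u \<in> trs S i a" "v \<in> trs S i a" "u \<in> trs S j b" "v \<in> trs S j b"
  shows "i = j \<and> a = b"
proof -
  obtain t1 where t1: "t1 \<in> S i" "u = t1 + a" using assms(5) unfolding trs_def by blast
  obtain t2 where t2: "t2 \<in> S i" "v = t2 + a" using assms(6) unfolding trs_def by blast
  obtain t1' where t1': "t1' \<in> S j" "u = t1' + b" using assms(7) unfolding trs_def by blast
  obtain t2' where t2': "t2' \<in> S j" "v = t2' + b" using assms(8) unfolding trs_def by blast
  note t = t1(1) t2(1) t1'(1) t2'(1) t1(2) t2(2) t1'(2) t2'(2)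
  have ne: "t1 \<noteq> t2" using t1(2) t2(2) assms(4) by blast
  have ne': "t1' \<noteq> t2'" using t1'(2) t2'(2) assms(4) by blast
  have 1: "u - v = t1 - t2" using t(5,6) by simp
  have 2: "u - v = t1' - t2'" using t(7,8) by simp
  from 1 2 have "t1 - t2 = t1' - t2'" by simp
  then have e: "t1 = t1' \<and> t2 = t2'"
    using dds_D[OF D assms(2,3) t(1-4) ne ne'] by blast
  then have "t1 + a = t1 + b" using t1(2) t1'(2) by simp
  then have "a = b" by simp
  moreover have "i = j"
  proof (rule ccontr)
    assume "i \<noteq> j"
    then have "S i \<inter> S j = {0}" using dds_disj[OF D assms(2,3)] by blast
    then have "t1 = 0" "t2 = 0" using e t by auto
    then show False using ne by simp
  qed
  ultimately show ?thesis by simp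
qed

lemma not_univ:
  assumes D: "distinct_difference_system l S" and "i < l"
  shows "\<exists>c. c \<notin> S i"
proof (rule ccontr)
  assume "\<not> ?thesis"
  then have U: "\<And>c. c \<in> S i" by blast
  obtain x where x: "x \<in> S i" "x \<noteq> 0" using dds_nz[OF D assms(2)] by blast
  have "x \<noteq> x + x" using x by simp
  moreover have "x - 0 = (x + x) - x" by simp
  ultimately have "x = x + x"
    using dds_D[OF D assms(2) assms(2) x(1) U[of 0] U[of "x+x"] U[of x]] x by simp
  then show False using x by simp
qed

lemma two_elems:
  assumes "finite Z" "2 \<le> card Z"
  shows "\<exists>u v. u \<in> Z \<and> v \<in> Z \<and> u \<noteq> v"
proof -
  have "Z \<noteq> {}" using assms(2) by (metis card.empty not_numeral_le_zero)
  then obtain u where u: "u \<in> Z" by blast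
  have "card (Z - {u}) \<ge> 1" using assms u by simp
  then have "Z - {u} \<noteq> {}" by (metis card.empty not_one_le_zero)
  then obtain v where "v \<in> Z - {u}" by blast
  then show ?thesis using u by blast
qed

lemma insert_good:
  assumes D: "distinct_difference_system l S" and "finite Z" "2 \<le> card Z"
    and "i < l" "Z \<subseteq> trs S i a" "y \<notin> trs S i a"
  shows "\<not> (\<exists>j<l. \<exists>b. insert y Z \<subseteq> trs S j b)"
proof
  assume "\<exists>j<l. \<exists>b. insert y Z \<subseteq> trs S j b"
  then obtain j b where jb: "j < l" "insert y Z \<subseteq> trs S j b" by blast
  obtain u v where uv: "u \<in> Z" "v \<in> Z" "u \<noteq> v" using two_elems assms(2,3) by blast
  have "i = j \<and> a = b" using two_common[OF D assms(4) jb(1) uv(3)] uv assms(5) jb(2) by blast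
  then show False using jb assms(6) by auto
qed

lemma extend_basis:
  fixes S :: "nat \<Rightarrow> 'a::{ab_group_add, finite} set"
  assumes D: "distinct_difference_system l S" and k3: "k \<ge> 3"
    and cU: "card (UNIV :: 'a set) \<ge> k" and cY: "card Y < k"
  shows "\<exists>B \<in> dds_bases k l S. Y \<subseteq> B"
proof -
  have "\<exists>B. Y \<subseteq> B \<and> B \<subseteq> UNIV \<and> card B = k - 1"
    by (rule exists_subset_between) (use cY cU in auto)
  then obtain Y' where Y': "Y \<subseteq> Y'" "card Y' = k - 1" by blast
  have fY': "finite Y'" by simp
  have c2: "2 \<le> card Y'" using Y' k3 by simp
  show ?thesis
  proof (cases "\<exists>i<l. \<exists>a. Y' \<subseteq> trs S i a")
    case True
    then obtain i a where ia: "i < l" "Y' \<subseteq> trs S i a" by blast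
    obtain c where c: "c \<notin> S i" using not_univ[OF D ia(1)] by blast
    have y: "c + a \<notin> trs S i a" using c unfolding trs_def by auto
    then have yn: "c + a \<notin> Y'" using ia by blast
    have "insert (c + a) Y' \<in> dds_bases k l S"
      unfolding dds_bases_iff
      using insert_good[OF D fY' c2 ia y] yn Y' k3 fY' by simp
    then show ?thesis using Y' by blast
  next
    case False
    have "Y' \<noteq> UNIV"
    proof
      assume "Y' = UNIV"
      then show False using Y' cU k3 by simp
    qed
    then obtain y where yn: "y \<notin> Y'" by blast
    have "insert y Y' \<in> dds_bases k l S"
      unfolding dds_bases_iff
      using False yn Y' k3 fY' by auto
    then show ?thesis using Y' by blast
  qed
qed

theorem theorem3p26:
  fixes k l :: nat and S :: "nat \<Rightarrow> 'a::{ab_group_add, finite} set"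
  assumes "k \<ge> 3"
    and "card (UNIV :: 'a set) \<ge> k"
    and "distinct_difference_system l S"
  shows "matroid_bases (UNIV :: 'a set) (dds_bases k l S)
       \<and> simple_matroid (UNIV :: 'a set) (dds_bases k l S)
       \<and> matroid_rank_is (dds_bases k l S) k
       \<and> translation_invariant (dds_bases k l S)"
proof (intro conjI)
  note D = assms(3)
  show R: "matroid_rank_is (dds_bases k l S) k"
    unfolding matroid_rank_is_def by (auto simp: dds_bases_iff)
  show "translation_invariant (dds_bases k l S)"
    unfolding translation_invariant_def
  proof (intro ballI allI)
    fix B and c :: 'a
    assume B: "B \<in> dds_bases k l S"
    have cB: "card ((\<lambda>x. x + c) ` B) = k" using B unfolding dds_bases_iff
      by (simp add: card_image)
    have "\<not> (\<exists>i<l. \<exists>a. (\<lambda>x. x + c) ` B \<subseteq> trs S i a)"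
    proof
      assume "\<exists>i<l. \<exists>a. (\<lambda>x. x + c) ` B \<subseteq> trs S i a"
      then obtain i a where "i < l" "(\<lambda>x. x + c) ` B \<subseteq> trs S i a" by blast
      then have h: "\<And>b. b \<in> B \<Longrightarrow> \<exists>s\<in>S i. b + c = s + a" unfolding trs_def by blast
      have "B \<subseteq> trs S i (a - c)" unfolding trs_def
      proof
        fix b assume "b \<in> B"
        then obtain s where s: "s \<in> S i" "b + c = s + a" using h by blast
        then have "b = s + (a - c)" by (simp add: algebra_simps)
        then show "b \<in> (\<lambda>s. s + (a - c)) ` S i" using s by blast
      qed
      then show False using B \<open>i < l\<close> unfolding dds_bases_iff by blast
    qed
    then show "(\<lambda>x. x + c) ` B \<in> dds_bases k l S" using cB unfolding dds_bases_iff by blast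
  qed
  show "simple_matroid (UNIV :: 'a set) (dds_bases k l S)"
    unfolding simple_matroid_def
  proof (intro allI impI)
    fix C :: "'a set"
    assume "mat_circuit UNIV (dds_bases k l S) C"
    then have ni: "\<not> mat_indep (dds_bases k l S) C" unfolding mat_circuit_def by blast
    have "\<not> card C < k"
      using extend_basis[OF D assms(1,2)] ni unfolding mat_indep_def by blast
    then show "3 \<le> card C" using assms(1) by simp
  qed
  show "matroid_bases (UNIV :: 'a set) (dds_bases k l S)"
    unfolding matroid_bases_def
  proof (intro conjI ballI)
    show "finite (UNIV :: 'a set)" by simp
    show "dds_bases k l S \<noteq> {}" using extend_basis[OF D assms(1,2), of "{}"] assms(1) by auto
    fix B assume "B \<in> dds_bases k l S" then show "B \<subseteq> UNIV" by simp
  next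
    fix B1 B2 x
    assume B1: "B1 \<in> dds_bases k l S" and B2: "B2 \<in> dds_bases k l S" and x: "x \<in> B1 - B2"
    have c1: "card B1 = k" and c2: "card B2 = k" using B1 B2 unfolding dds_bases_iff by auto
    define Z where "Z = B1 - {x}"
    have fZ: "finite Z" by simp
    have cZ: "card Z = k - 1" using c1 x unfolding Z_def by simp
    have cZ2: "2 \<le> card Z" using cZ assms(1) by simp
    have ne: "\<not> B2 \<subseteq> B1"
    proof
      assume "B2 \<subseteq> B1"
      then have "B2 \<subseteq> Z" using x unfolding Z_def by blast
      then have "card B2 \<le> card Z" by (simp add: card_mono)
      then show False using c2 cZ assms(1) by simp
    qed
    have ins: "card (insert y Z) = k" if "y \<in> B2 - B1" for y
      using that cZ assms(1) unfolding Z_def by simp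
    show "\<exists>y\<in>B2 - B1. insert y (B1 - {x}) \<in> dds_bases k l S"
    proof (cases "\<exists>i<l. \<exists>a. Z \<subseteq> trs S i a")
      case True
      then obtain i a where ia: "i < l" "Z \<subseteq> trs S i a" by blast
      have "\<exists>y\<in>B2 - B1. y \<notin> trs S i a"
      proof (rule ccontr)
        assume "\<not> ?thesis"
        then have "B2 - B1 \<subseteq> trs S i a" by blast
        moreover have "B2 \<inter> B1 \<subseteq> Z" using x unfolding Z_def by blast
        ultimately have "B2 \<subseteq> trs S i a" using ia by blast
        then show False using B2 ia(1) unfolding dds_bases_iff by blast
      qed
      then obtain y where y: "y \<in> B2 - B1" "y \<notin> trs S i a" by blast
      have "insert y Z \<in> dds_bases k l S"
        unfolding dds_bases_iff using insert_good[OF D fZ cZ2 ia y(2)] ins[OF y(1)] by simp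
      then show ?thesis using y(1) unfolding Z_def by blast
    next
      case False
      obtain y where y: "y \<in> B2 - B1" using ne by blast
      have "insert y Z \<in> dds_bases k l S"
        unfolding dds_bases_iff using False ins[OF y] by blast
      then show ?thesis using y unfolding Z_def by blast
    qed
  qed
qed

end
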